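(* Let $c_0,\delta,\tilde\beta$ be positive constants and consider the Khokhlov–Zabolotskaya–Kuznetsov equation $$E:=\delta p_{ttt}+\tilde\beta\,(p^2)_{tt}-2c_0^3p_{zt}+c_0^4(p_{xx}+p_{yy})=0$$ for $p(x,y,z,t)$. A function $\Lambda(x,y,z,t,p,p_x,p_y,p_z,p_t)$ is a multiplier, i.e. $\mathcal{E}_p[\Lambda E]=0$ identically, if and only if $$\Lambda=\phi(x,y,z)+t\,\psi(x,y,z),\qquad\text{where}\quad \phi_{xx}+\phi_{yy}=\tfrac{2}{c_0}\psi_z,\quad \psi_{xx}+\psi_{yy}=0.$$ For any such $\phi,\psi$, every smooth solution $p$ of $E=0$ satisfies $$\partial_tT^t+\partial_xT^x+\partial_yT^y+\partial_zT^z=0$$ with $$T^t=(\phi+t\psi)(\delta p_{tt}+2\tilde\beta pp_t-2c_0^3p_z)-\psi(\delta p_t+\tilde\beta p^2),$$ $$T^x=c_0^4\big[(\phi+t\psi)p_x-p(\phi_x+t\psi_x)\big],\quad T^y=c_0^4\big[(\phi+t\psi)p_y-p(\phi_y+t\psi_y)\big],\quad T^z=2c_0^3p\psi.$$ In particular, the equation has infinitely many conservation laws.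
   Context: $\mathcal{E}_p=\sum(-D_x)^k(-D_y)^\ell(-D_z)^m(-D_t)^n\,\partial/\partial p_{kx\,\ell y\,mz\,nt}$ is the Euler (variational) operator with respect to $p$, where $D_x,D_y,D_z,D_t$ are total derivatives on the jet space; $\Lambda E$ is a total divergence iff $\mathcal{E}_p[\Lambda E]=0$ identically. Subscripts denote partial derivatives. *)

theory Defs
  imports "HOL-Analysis.Analysis"
begin

type_synonym mi = "nat \<times> nat \<times> nat \<times> nat"   (* multi-index (k,l,m,n) for d_x^k d_y^l d_z^m d_t^n *)

datatype jc = JX | JY | JZ | JT | JP mi
  (* JX..JT: independent variables x,y,z,t;  JP (k,l,m,n): the jet coordinate p_{kx ly mz nt} *)

type_synonym jet = "jc \<Rightarrow> real"

definition pd :: "'c \<Rightarrow> (('c \<Rightarrow> real) \<Rightarrow> real) \<Rightarrow> ('c \<Rightarrow> real) \<Rightarrow> real" where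
  "pd c f u = deriv (\<lambda>s. f (u(c := s))) (u c)"

definition smooth_fun :: "(('c \<Rightarrow> real) \<Rightarrow> real) \<Rightarrow> bool" where
  "smooth_fun f \<longleftrightarrow>
     (\<exists>S. finite S \<and> (\<forall>u v. (\<forall>c\<in>S. u c = v c) \<longrightarrow> f u = f v)) \<and>
     (\<forall>cs. continuous_on UNIV (foldr pd cs f) \<and>
           (\<forall>c u. (\<lambda>s. foldr pd cs f (u(c := s))) differentiable (at (u c))))"

definition MI :: "nat \<Rightarrow> mi set" where
  "MI M = {(k,l,m,n). k + l + m + n \<le> M}"

fun shift :: "jc \<Rightarrow> mi \<Rightarrow> mi" where
  "shift JX (k,l,m,n) = (Suc k,l,m,n)"
| "shift JY (k,l,m,n) = (k,Suc l,m,n)"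
| "shift JZ (k,l,m,n) = (k,l,Suc m,n)"
| "shift JT (k,l,m,n) = (k,l,m,Suc n)"
| "shift (JP a) b = b"

(* total derivative D_c (c one of JX,JY,JZ,JT), exact on functions of jet order \<le> M *)
definition Dtot :: "jc \<Rightarrow> nat \<Rightarrow> (jet \<Rightarrow> real) \<Rightarrow> jet \<Rightarrow> real" where
  "Dtot c M f u = pd c f u + (\<Sum>\<alpha>\<in>MI M. u (JP (shift c \<alpha>)) * pd (JP \<alpha>) f u)"

(* Euler operator w.r.t. p, for a differential function of jet order \<le> N
   (all intermediate functions have order \<le> 2N, so total derivatives with bound 2N are exact) *)
definition Euler :: "nat \<Rightarrow> (jet \<Rightarrow> real) \<Rightarrow> jet \<Rightarrow> real" where
  "Euler N f u = (\<Sum>(k,l,m,n)\<in>MI N. (-1) ^ (k+l+m+n) *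
      ((Dtot JX (2*N) ^^ k) ((Dtot JY (2*N) ^^ l) ((Dtot JZ (2*N) ^^ m)
         ((Dtot JT (2*N) ^^ n) (pd (JP (k,l,m,n)) f))))) u)"

(* the KZK equation as a differential function of order 3:
   E = delta p_ttt + beta (p^2)_tt - 2 c0^3 p_zt + c0^4 (p_xx + p_yy),
   with (p^2)_tt = 2 p p_tt + 2 p_t^2 *)
definition KZK :: "real \<Rightarrow> real \<Rightarrow> real \<Rightarrow> jet \<Rightarrow> real" where
  "KZK c0 \<delta> \<beta> u = \<delta> * u (JP (0,0,0,3))
     + \<beta> * (2 * u (JP (0,0,0,0)) * u (JP (0,0,0,2)) + 2 * (u (JP (0,0,0,1)))^2)
     - 2 * c0^3 * u (JP (0,0,1,1))
     + c0^4 * (u (JP (2,0,0,0)) + u (JP (0,2,0,0)))"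

type_synonym mult = "real \<Rightarrow> real \<Rightarrow> real \<Rightarrow> real \<Rightarrow> real \<Rightarrow> real \<Rightarrow> real \<Rightarrow> real \<Rightarrow> real \<Rightarrow> real"

definition liftL :: "mult \<Rightarrow> jet \<Rightarrow> real" where
  "liftL \<Lambda> u = \<Lambda> (u JX) (u JY) (u JZ) (u JT) (u (JP (0,0,0,0)))
      (u (JP (1,0,0,0))) (u (JP (0,1,0,0))) (u (JP (0,0,1,0))) (u (JP (0,0,0,1)))"

(* multiplier: E_p[Lambda E] = 0 identically (Lambda E has jet order 3) *)
definition is_multiplier :: "real \<Rightarrow> real \<Rightarrow> real \<Rightarrow> mult \<Rightarrow> bool" where
  "is_multiplier c0 \<delta> \<beta> \<Lambda> \<longleftrightarrow>
     (\<forall>u. Euler 3 (\<lambda>v. liftL \<Lambda> v * KZK c0 \<delta> \<beta> v) u = 0)"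

definition smooth3 :: "(real \<Rightarrow> real \<Rightarrow> real \<Rightarrow> real) \<Rightarrow> bool" where
  "smooth3 g \<longleftrightarrow> smooth_fun (\<lambda>u::jet. g (u JX) (u JY) (u JZ))"

definition smooth4 :: "(real \<Rightarrow> real \<Rightarrow> real \<Rightarrow> real \<Rightarrow> real) \<Rightarrow> bool" where
  "smooth4 g \<longleftrightarrow> smooth_fun (\<lambda>u::jet. g (u JX) (u JY) (u JZ) (u JT))"

definition d3x :: "(real \<Rightarrow> real \<Rightarrow> real \<Rightarrow> real) \<Rightarrow> real \<Rightarrow> real \<Rightarrow> real \<Rightarrow> real" where
  "d3x g x y z = deriv (\<lambda>s. g s y z) x"
definition d3y :: "(real \<Rightarrow> real \<Rightarrow> real \<Rightarrow> real) \<Rightarrow> real \<Rightarrow> real \<Rightarrow> real \<Rightarrow> real" where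
  "d3y g x y z = deriv (\<lambda>s. g x s z) y"
definition d3z :: "(real \<Rightarrow> real \<Rightarrow> real \<Rightarrow> real) \<Rightarrow> real \<Rightarrow> real \<Rightarrow> real \<Rightarrow> real" where
  "d3z g x y z = deriv (\<lambda>s. g x y s) z"

definition dX :: "(real \<Rightarrow> real \<Rightarrow> real \<Rightarrow> real \<Rightarrow> real) \<Rightarrow> real \<Rightarrow> real \<Rightarrow> real \<Rightarrow> real \<Rightarrow> real" where
  "dX g x y z t = deriv (\<lambda>s. g s y z t) x"
definition dY :: "(real \<Rightarrow> real \<Rightarrow> real \<Rightarrow> real \<Rightarrow> real) \<Rightarrow> real \<Rightarrow> real \<Rightarrow> real \<Rightarrow> real \<Rightarrow> real" where
  "dY g x y z t = deriv (\<lambda>s. g x s z t) y"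
definition dZ :: "(real \<Rightarrow> real \<Rightarrow> real \<Rightarrow> real \<Rightarrow> real) \<Rightarrow> real \<Rightarrow> real \<Rightarrow> real \<Rightarrow> real \<Rightarrow> real" where
  "dZ g x y z t = deriv (\<lambda>s. g x y s t) z"
definition dT :: "(real \<Rightarrow> real \<Rightarrow> real \<Rightarrow> real \<Rightarrow> real) \<Rightarrow> real \<Rightarrow> real \<Rightarrow> real \<Rightarrow> real \<Rightarrow> real" where
  "dT g x y z t = deriv (\<lambda>s. g x y z s) t"

definition solves_KZK :: "real \<Rightarrow> real \<Rightarrow> real \<Rightarrow> (real \<Rightarrow> real \<Rightarrow> real \<Rightarrow> real \<Rightarrow> real) \<Rightarrow> bool" where
  "solves_KZK c0 \<delta> \<beta> p \<longleftrightarrow> (\<forall>x y z t.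
     \<delta> * dT (dT (dT p)) x y z t
     + \<beta> * dT (dT (\<lambda>x y z t. (p x y z t)^2)) x y z t
     - 2 * c0^3 * dT (dZ p) x y z t
     + c0^4 * (dX (dX p) x y z t + dY (dY p) x y z t) = 0)"

definition Tt :: "real \<Rightarrow> real \<Rightarrow> real \<Rightarrow> (real \<Rightarrow> real \<Rightarrow> real \<Rightarrow> real) \<Rightarrow> (real \<Rightarrow> real \<Rightarrow> real \<Rightarrow> real)
    \<Rightarrow> (real \<Rightarrow> real \<Rightarrow> real \<Rightarrow> real \<Rightarrow> real) \<Rightarrow> real \<Rightarrow> real \<Rightarrow> real \<Rightarrow> real \<Rightarrow> real" where
  "Tt c0 \<delta> \<beta> \<phi> \<psi> p x y z t =
     (\<phi> x y z + t * \<psi> x y z) * (\<delta> * dT (dT p) x y z t + 2 * \<beta> * p x y z t * dT p x y z t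
                                  - 2 * c0^3 * dZ p x y z t)
     - \<psi> x y z * (\<delta> * dT p x y z t + \<beta> * (p x y z t)^2)"

definition Tx :: "real \<Rightarrow> (real \<Rightarrow> real \<Rightarrow> real \<Rightarrow> real) \<Rightarrow> (real \<Rightarrow> real \<Rightarrow> real \<Rightarrow> real)
    \<Rightarrow> (real \<Rightarrow> real \<Rightarrow> real \<Rightarrow> real \<Rightarrow> real) \<Rightarrow> real \<Rightarrow> real \<Rightarrow> real \<Rightarrow> real \<Rightarrow> real" where
  "Tx c0 \<phi> \<psi> p x y z t = c0^4 * ((\<phi> x y z + t * \<psi> x y z) * dX p x y z t
                                  - p x y z t * (d3x \<phi> x y z + t * d3x \<psi> x y z))"

definition Ty :: "real \<Rightarrow> (real \<Rightarrow> real \<Rightarrow> real \<Rightarrow> real) \<Rightarrow> (real \<Rightarrow> real \<Rightarrow> real \<Rightarrow> real)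
    \<Rightarrow> (real \<Rightarrow> real \<Rightarrow> real \<Rightarrow> real \<Rightarrow> real) \<Rightarrow> real \<Rightarrow> real \<Rightarrow> real \<Rightarrow> real \<Rightarrow> real" where
  "Ty c0 \<phi> \<psi> p x y z t = c0^4 * ((\<phi> x y z + t * \<psi> x y z) * dY p x y z t
                                  - p x y z t * (d3y \<phi> x y z + t * d3y \<psi> x y z))"

definition Tz :: "real \<Rightarrow> (real \<Rightarrow> real \<Rightarrow> real \<Rightarrow> real)
    \<Rightarrow> (real \<Rightarrow> real \<Rightarrow> real \<Rightarrow> real \<Rightarrow> real) \<Rightarrow> real \<Rightarrow> real \<Rightarrow> real \<Rightarrow> real \<Rightarrow> real" where
  "Tz c0 \<psi> p x y z t = 2 * c0^3 * p x y z t * \<psi> x y z"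

definition det_eqs :: "real \<Rightarrow> (real \<Rightarrow> real \<Rightarrow> real \<Rightarrow> real) \<Rightarrow> (real \<Rightarrow> real \<Rightarrow> real \<Rightarrow> real) \<Rightarrow> bool" where
  "det_eqs c0 \<phi> \<psi> \<longleftrightarrow> (\<forall>x y z.
     d3x (d3x \<phi>) x y z + d3y (d3y \<phi>) x y z = (2 / c0) * d3z \<psi> x y z \<and>
     d3x (d3x \<psi>) x y z + d3y (d3y \<psi>) x y z = 0)"

end

theory Submission
  imports Defs
begin

lemma rdiff_iff: "((f::real\<Rightarrow>real) differentiable at x) = (f field_differentiable at x)"
  using DERIV_deriv_iff_real_differentiable DERIV_deriv_iff_field_differentiable by blast

definition pdiff :: "(jet \<Rightarrow> real) \<Rightarrow> bool" where
  "pdiff f \<longleftrightarrow> (\<forall>c u. (\<lambda>s. f (u(c := s))) field_differentiable (at (u c)))"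

definition sm :: "(jet \<Rightarrow> real) \<Rightarrow> bool" where
  "sm f \<longleftrightarrow> (\<forall>cs. pdiff (foldr pd cs f))"

lemma pdiffD: "pdiff f \<Longrightarrow> (\<lambda>s. f (u(c := s))) field_differentiable (at s)"
proof -
  assume "pdiff f"
  then have "(\<lambda>r. f ((u(c := s))(c := r))) field_differentiable (at ((u(c := s)) c))"
    unfolding pdiff_def by blast
  then show ?thesis by simp
qed

lemma pd_upd: "pd c f (u(c := s)) = deriv (\<lambda>r. f (u(c := r))) s"
  by (simp add: pd_def)

lemma pdiff_add: "pdiff f \<Longrightarrow> pdiff g \<Longrightarrow> pdiff (\<lambda>u. f u + g u)"
  unfolding pdiff_def by (auto intro!: field_differentiable_add)
lemma pdiff_mult: "pdiff f \<Longrightarrow> pdiff g \<Longrightarrow> pdiff (\<lambda>u. f u * g u)"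
  unfolding pdiff_def by (auto intro!: field_differentiable_mult)
lemma pdiff_const: "pdiff (\<lambda>u. k)"
  unfolding pdiff_def by auto
lemma pdiff_coord: "pdiff (\<lambda>u. u c)"
proof -
  have "(\<lambda>s. (u(c' := s)) c) field_differentiable (at (u c'))" for u c'
  proof (cases "c = c'")
    case True then show ?thesis by simp
  next
    case False then show ?thesis by simp
  qed
  then show ?thesis unfolding pdiff_def by blast
qed

lemma pd_add: "pdiff f \<Longrightarrow> pdiff g \<Longrightarrow> pd c (\<lambda>u. f u + g u) = (\<lambda>u. pd c f u + pd c g u)"
  unfolding pd_def pdiff_def by (auto intro!: ext deriv_add)
lemma pd_mult: "pdiff f \<Longrightarrow> pdiff g \<Longrightarrow> pd c (\<lambda>u. f u * g u) = (\<lambda>u. pd c f u * g u + f u * pd c g u)"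
  unfolding pd_def pdiff_def by (auto intro!: ext simp: deriv_mult)
lemma pd_diff: "pdiff f \<Longrightarrow> pdiff g \<Longrightarrow> pd c (\<lambda>u. f u - g u) = (\<lambda>u. pd c f u - pd c g u)"
  unfolding pd_def pdiff_def by (auto intro!: ext deriv_diff)
lemma pd_minus: "pdiff f \<Longrightarrow> pd c (\<lambda>u. - f u) = (\<lambda>u. - pd c f u)"
  unfolding pd_def pdiff_def by (auto intro!: ext deriv_minus)
lemma pd_const: "pd c (\<lambda>u. k) = (\<lambda>u. 0)"
  unfolding pd_def by simp
lemma pd_coord: "pd c (\<lambda>u. u c') = (\<lambda>u. if c' = c then 1 else 0)"
  unfolding pd_def by (auto intro!: ext)

inductive Pc :: "(jet \<Rightarrow> real) \<Rightarrow> bool" where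
  Pc_sm: "sm f \<Longrightarrow> Pc f"
| Pc_add: "Pc f \<Longrightarrow> Pc g \<Longrightarrow> Pc (\<lambda>u. f u + g u)"
| Pc_mult: "Pc f \<Longrightarrow> Pc g \<Longrightarrow> Pc (\<lambda>u. f u * g u)"
| Pc_const: "Pc (\<lambda>u. k)"
| Pc_coord: "Pc (\<lambda>u. u c)"

lemma sm_pdiff: "sm f \<Longrightarrow> pdiff f"
  unfolding sm_def by (metis foldr_Nil id_apply)

lemma sm_pd: "sm f \<Longrightarrow> sm (pd c f)"
  unfolding sm_def
proof
  fix cs assume "\<forall>cs. pdiff (foldr pd cs f)"
  then have "pdiff (foldr pd (cs @ [c]) f)" by blast
  then show "pdiff (foldr pd cs (pd c f))" by simp
qed

lemma Pc_step: "Pc f \<Longrightarrow> pdiff f \<and> (\<forall>c. Pc (pd c f))"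
proof (induction rule: Pc.induct)
  case (Pc_sm f)
  then show ?case by (simp add: sm_pdiff sm_pd Pc.Pc_sm)
next
  case (Pc_add f g)
  then show ?case by (simp add: pdiff_add pd_add Pc.Pc_add)
next
  case (Pc_mult f g)
  then show ?case by (simp add: pdiff_mult pd_mult Pc.Pc_add Pc.Pc_mult)
next
  case (Pc_const k)
  then show ?case by (simp add: pdiff_const pd_const Pc.Pc_const)
next
  case (Pc_coord c)
  have "pd c' (\<lambda>u. u c) = (\<lambda>u. (if c = c' then 1 else 0))" for c' by (simp add: pd_coord)
  then show ?case by (simp add: pdiff_coord Pc.Pc_const)
qed

lemma Pc_sm_iff: "Pc f \<Longrightarrow> sm f"
proof -
  assume "Pc f"
  have "Pc (foldr pd cs f)" for cs
    by (induction cs) (use \<open>Pc f\<close> Pc_step in auto)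
  then show ?thesis unfolding sm_def using Pc_step by blast
qed

lemma sm_add[simp]: "sm f \<Longrightarrow> sm g \<Longrightarrow> sm (\<lambda>u. f u + g u)"
  by (rule Pc_sm_iff, rule Pc.Pc_add; rule Pc.Pc_sm)
lemma sm_mult[simp]: "sm f \<Longrightarrow> sm g \<Longrightarrow> sm (\<lambda>u. f u * g u)"
  by (rule Pc_sm_iff, rule Pc.Pc_mult; rule Pc.Pc_sm)
lemma sm_const[simp]: "sm (\<lambda>u. k)"
  by (rule Pc_sm_iff, rule Pc.Pc_const)
lemma sm_coord[simp]: "sm (\<lambda>u. u c)"
  by (rule Pc_sm_iff, rule Pc.Pc_coord)
lemma sm_minus[simp]: "sm f \<Longrightarrow> sm (\<lambda>u. - f u)"
proof -
  assume "sm f"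
  then have "sm (\<lambda>u. (-1) * f u)" by (intro sm_mult sm_const)
  then show ?thesis by simp
qed
lemma sm_diff[simp]: "sm f \<Longrightarrow> sm g \<Longrightarrow> sm (\<lambda>u. f u - g u)"
proof -
  assume "sm f" "sm g"
  then have "sm (\<lambda>u. f u + - g u)" by (intro sm_add sm_minus)
  then show ?thesis by simp
qed

definition dep_on :: "jc set \<Rightarrow> (jet \<Rightarrow> real) \<Rightarrow> bool" where
  "dep_on S f \<longleftrightarrow> (\<forall>u v. (\<forall>c\<in>S. u c = v c) \<longrightarrow> f u = f v)"

lemma dep_on_upd: "dep_on S f \<Longrightarrow> c \<notin> S \<Longrightarrow> f (u(c:=s)) = f u"
  unfolding dep_on_def by (metis fun_upd_other)

lemma dep_on_pd_zero: "dep_on S f \<Longrightarrow> c \<notin> S \<Longrightarrow> pd c f = (\<lambda>u. 0)"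
  unfolding pd_def by (simp add: dep_on_upd)

lemma dep_on_pd: "dep_on S f \<Longrightarrow> dep_on S (pd c f)"
proof (cases "c \<in> S")
  case True
  assume d: "dep_on S f"
  show ?thesis unfolding dep_on_def
  proof (intro allI impI)
    fix u v :: jet assume a: "\<forall>c\<in>S. u c = v c"
    have "(\<lambda>s. f (u(c:=s))) = (\<lambda>s. f (v(c:=s)))"
      using d a unfolding dep_on_def by (intro ext) (metis fun_upd_apply)
    moreover have "u c = v c" using a True by blast
    ultimately show "pd c f u = pd c f v" unfolding pd_def by simp
  qed
next
  case False
  assume "dep_on S f"
  then have "pd c f = (\<lambda>u. 0)" using False by (rule dep_on_pd_zero)
  then show ?thesis unfolding dep_on_def by simp
qed

lemma dep_on_foldr_pd: "dep_on S f \<Longrightarrow> dep_on S (foldr pd cs f)"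
  by (induction cs) (auto intro: dep_on_pd)

lemma dep_on_mono: "S \<subseteq> T \<Longrightarrow> dep_on S f \<Longrightarrow> dep_on T f"
  unfolding dep_on_def by blast

definition nine :: "jc set" where
  "nine = {JX, JY, JZ, JT, JP (0,0,0,0), JP (1,0,0,0), JP (0,1,0,0), JP (0,0,1,0), JP (0,0,0,1)}"

definition B5 :: "mi set" where
  "B5 = {(0,0,0,0), (1,0,0,0), (0,1,0,0), (0,0,1,0), (0,0,0,1)}"

lemma JP_nine: "(JP a \<in> nine) = (a \<in> B5)"
  unfolding nine_def B5_def by auto

lemma dep_on_liftL: "dep_on nine (liftL \<Lambda>)"
  unfolding dep_on_def liftL_def nine_def by simp

lemma finite_MI: "finite (MI M)"
proof -
  have "MI M \<subseteq> {..M} \<times> {..M} \<times> {..M} \<times> {..M}" unfolding MI_def by auto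
  then show ?thesis by (rule finite_subset) auto
qed

lemma B5_MI: "1 \<le> M \<Longrightarrow> B5 \<subseteq> MI M"
  unfolding B5_def MI_def by auto

lemma Dtot_add: "sm f \<Longrightarrow> sm g \<Longrightarrow> Dtot c M (\<lambda>u. f u + g u) = (\<lambda>u. Dtot c M f u + Dtot c M g u)"
  unfolding Dtot_def by (simp add: sm_pdiff pd_add sum.distrib algebra_simps)

lemma Dtot_diff: "sm f \<Longrightarrow> sm g \<Longrightarrow> Dtot c M (\<lambda>u. f u - g u) = (\<lambda>u. Dtot c M f u - Dtot c M g u)"
  unfolding Dtot_def by (simp add: sm_pdiff pd_diff sum_subtractf algebra_simps)

lemma Dtot_minus: "sm f \<Longrightarrow> Dtot c M (\<lambda>u. - f u) = (\<lambda>u. - Dtot c M f u)"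
  unfolding Dtot_def by (simp add: sm_pdiff pd_minus sum_negf algebra_simps)

lemma Dtot_mult: "sm f \<Longrightarrow> sm g \<Longrightarrow>
   Dtot c M (\<lambda>u. f u * g u) = (\<lambda>u. Dtot c M f u * g u + f u * Dtot c M g u)"
  unfolding Dtot_def
  by (simp add: sm_pdiff pd_mult sum.distrib sum_distrib_left sum_distrib_right algebra_simps)

lemma Dtot_const: "Dtot c M (\<lambda>u. k) = (\<lambda>u. 0)"
  unfolding Dtot_def by (simp add: pd_const)

lemma Dtot_coord: "\<alpha> \<in> MI M \<Longrightarrow> c \<in> {JX,JY,JZ,JT} \<Longrightarrow>
    Dtot c M (\<lambda>u. u (JP \<alpha>)) = (\<lambda>u. u (JP (shift c \<alpha>)))"
proof -
  assume a: "\<alpha> \<in> MI M" "c \<in> {JX,JY,JZ,JT}"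
  have "Dtot c M (\<lambda>u. u (JP \<alpha>)) u = u (JP (shift c \<alpha>))" for u
  proof -
    have "Dtot c M (\<lambda>u. u (JP \<alpha>)) u = (\<Sum>\<beta>\<in>MI M. if \<alpha> = \<beta> then u (JP (shift c \<beta>)) else 0)"
      unfolding Dtot_def pd_coord using a by (auto intro!: sum.cong)
    also have "\<dots> = u (JP (shift c \<alpha>))" using a finite_MI by (simp add: sum.delta)
    finally show ?thesis .
  qed
  then show ?thesis by blast
qed

lemma Dtot_atom: "dep_on nine g \<Longrightarrow> 1 \<le> M \<Longrightarrow> Dtot c M g = (\<lambda>u. pd c g u
   + u (JP (shift c (0,0,0,0))) * pd (JP (0,0,0,0)) g u
   + u (JP (shift c (1,0,0,0))) * pd (JP (1,0,0,0)) g u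
   + u (JP (shift c (0,1,0,0))) * pd (JP (0,1,0,0)) g u
   + u (JP (shift c (0,0,1,0))) * pd (JP (0,0,1,0)) g u
   + u (JP (shift c (0,0,0,1))) * pd (JP (0,0,0,1)) g u)"
proof -
  assume d: "dep_on nine g" and M: "1 \<le> M"
  have "Dtot c M g u = pd c g u + (\<Sum>\<alpha>\<in>B5. u (JP (shift c \<alpha>)) * pd (JP \<alpha>) g u)" for u
  proof -
    have "(\<Sum>\<alpha>\<in>MI M. u (JP (shift c \<alpha>)) * pd (JP \<alpha>) g u) = (\<Sum>\<alpha>\<in>B5. u (JP (shift c \<alpha>)) * pd (JP \<alpha>) g u)"
    proof (rule sum.mono_neutral_right[OF finite_MI B5_MI[OF M]])
      show "\<forall>i\<in>MI M - B5. u (JP (shift c i)) * pd (JP i) g u = 0"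
        using dep_on_pd_zero[OF d] JP_nine by auto
    qed
    then show ?thesis unfolding Dtot_def by simp
  qed
  then show ?thesis unfolding B5_def by (auto intro!: ext simp: add.assoc)
qed

lemma Dtot_atom_pd: "dep_on nine g \<Longrightarrow> Dtot c 6 (pd c' g) = (\<lambda>u. pd c (pd c' g) u
   + u (JP (shift c (0,0,0,0))) * pd (JP (0,0,0,0)) (pd c' g) u
   + u (JP (shift c (1,0,0,0))) * pd (JP (1,0,0,0)) (pd c' g) u
   + u (JP (shift c (0,1,0,0))) * pd (JP (0,1,0,0)) (pd c' g) u
   + u (JP (shift c (0,0,1,0))) * pd (JP (0,0,1,0)) (pd c' g) u
   + u (JP (shift c (0,0,0,1))) * pd (JP (0,0,0,1)) (pd c' g) u)"
  by (rule Dtot_atom) (auto intro: dep_on_pd)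

lemma Dtot_atom_L: "Dtot c 6 (liftL \<Lambda>) = (\<lambda>u. pd c (liftL \<Lambda>) u
   + u (JP (shift c (0,0,0,0))) * pd (JP (0,0,0,0)) (liftL \<Lambda>) u
   + u (JP (shift c (1,0,0,0))) * pd (JP (1,0,0,0)) (liftL \<Lambda>) u
   + u (JP (shift c (0,1,0,0))) * pd (JP (0,1,0,0)) (liftL \<Lambda>) u
   + u (JP (shift c (0,0,1,0))) * pd (JP (0,0,1,0)) (liftL \<Lambda>) u
   + u (JP (shift c (0,0,0,1))) * pd (JP (0,0,0,1)) (liftL \<Lambda>) u)"
  by (rule Dtot_atom) (auto intro: dep_on_liftL)

lemma funpow_Dtot_zero: "(Dtot c M ^^ k) (\<lambda>u. 0) = (\<lambda>u. 0)"
  by (induction k) (auto simp: Dtot_const)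

lemma Euler_reduce:
  assumes "S \<subseteq> MI N" "\<forall>\<alpha>\<in>MI N - S. pd (JP \<alpha>) f = (\<lambda>u. 0)"
  shows "Euler N f u = (\<Sum>(k,l,m,n)\<in>S. (-1) ^ (k+l+m+n) *
      ((Dtot JX (2*N) ^^ k) ((Dtot JY (2*N) ^^ l) ((Dtot JZ (2*N) ^^ m)
         ((Dtot JT (2*N) ^^ n) (pd (JP (k,l,m,n)) f))))) u)"
  unfolding Euler_def
  by (rule sum.mono_neutral_right[OF finite_MI assms(1)]) (use assms(2) in \<open>auto simp: funpow_Dtot_zero\<close>)


lemma KZK_eq: "KZK c0 \<delta> \<beta> = (\<lambda>u. \<delta> * u (JP (0,0,0,3))
     + \<beta> * (2 * u (JP (0,0,0,0)) * u (JP (0,0,0,2)) + 2 * (u (JP (0,0,0,1)) * u (JP (0,0,0,1))))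
     - 2 * c0^3 * u (JP (0,0,1,1))
     + c0^4 * (u (JP (2,0,0,0)) + u (JP (0,2,0,0))))"
  unfolding KZK_def by (simp add: power2_eq_square)

lemma sm_KZK: "sm (KZK c0 \<delta> \<beta>)"
  unfolding KZK_eq by simp

definition K7 :: "jc set" where
  "K7 = {JP (0,0,0,0), JP (0,0,0,1), JP (0,0,0,2), JP (0,0,0,3), JP (0,0,1,1), JP (2,0,0,0), JP (0,2,0,0)}"

lemma dep_on_KZK: "dep_on K7 (KZK c0 \<delta> \<beta>)"
  unfolding dep_on_def KZK_def K7_def by simp

definition S10 :: "mi set" where
  "S10 = {(0,0,0,0),(1,0,0,0),(0,1,0,0),(0,0,1,0),(0,0,0,1),(0,0,0,2),(0,0,0,3),(0,0,1,1),(2,0,0,0),(0,2,0,0)}"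

lemma Euler_terms:
  fixes g :: "jet \<Rightarrow> real" and c0 \<delta> \<beta> :: real
  assumes "sm g" "dep_on nine g"
  shows "Euler 3 (\<lambda>v. g v * KZK c0 \<delta> \<beta> v) u = (let f = (\<lambda>v. g v * KZK c0 \<delta> \<beta> v) in
      pd (JP (0,0,0,0)) f u
    - Dtot JX 6 (pd (JP (1,0,0,0)) f) u
    - Dtot JY 6 (pd (JP (0,1,0,0)) f) u
    - Dtot JZ 6 (pd (JP (0,0,1,0)) f) u
    - Dtot JT 6 (pd (JP (0,0,0,1)) f) u
    + Dtot JT 6 (Dtot JT 6 (pd (JP (0,0,0,2)) f)) u
    - Dtot JT 6 (Dtot JT 6 (Dtot JT 6 (pd (JP (0,0,0,3)) f))) u
    + Dtot JZ 6 (Dtot JT 6 (pd (JP (0,0,1,1)) f)) u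
    + Dtot JX 6 (Dtot JX 6 (pd (JP (2,0,0,0)) f)) u
    + Dtot JY 6 (Dtot JY 6 (pd (JP (0,2,0,0)) f)) u)"
proof -
  define f where "f = (\<lambda>v. g v * KZK c0 \<delta> \<beta> v)"
  have sub: "S10 \<subseteq> MI 3" unfolding S10_def MI_def by auto
  have z: "\<forall>\<alpha>\<in>MI 3 - S10. pd (JP \<alpha>) f = (\<lambda>u. 0)"
  proof
    fix \<alpha> assume a: "\<alpha> \<in> MI 3 - S10"
    have "JP \<alpha> \<notin> nine" "JP \<alpha> \<notin> K7" using a unfolding nine_def K7_def S10_def by auto
    then have "pd (JP \<alpha>) g = (\<lambda>u. 0)" "pd (JP \<alpha>) (KZK c0 \<delta> \<beta>) = (\<lambda>u. 0)"
      using dep_on_pd_zero assms(2) dep_on_KZK by blast+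
    then show "pd (JP \<alpha>) f = (\<lambda>u. 0)"
      unfolding f_def using assms(1) sm_KZK by (simp add: pd_mult sm_pdiff)
  qed
  show ?thesis
    unfolding Euler_reduce[OF sub z] f_def[symmetric] Let_def
    by (simp add: S10_def eval_nat_numeral algebra_simps)
qed

lemma pd_add_sm: "sm f \<Longrightarrow> sm g \<Longrightarrow> pd c (\<lambda>u. f u + g u) = (\<lambda>u. pd c f u + pd c g u)"
  by (simp add: pd_add sm_pdiff)
lemma pd_diff_sm: "sm f \<Longrightarrow> sm g \<Longrightarrow> pd c (\<lambda>u. f u - g u) = (\<lambda>u. pd c f u - pd c g u)"
  by (simp add: pd_diff sm_pdiff)
lemma pd_mult_sm: "sm f \<Longrightarrow> sm g \<Longrightarrow> pd c (\<lambda>u. f u * g u) = (\<lambda>u. pd c f u * g u + f u * pd c g u)"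
  by (simp add: pd_mult sm_pdiff)
lemma pd_minus_sm: "sm f \<Longrightarrow> pd c (\<lambda>u. - f u) = (\<lambda>u. - pd c f u)"
  by (simp add: pd_minus sm_pdiff)

lemma dep_on_upd9: "dep_on nine f \<Longrightarrow> c \<notin> nine \<Longrightarrow> f (u(c:=s)) = f u"
  by (rule dep_on_upd)

lemma dep_on_pd_zero9: "dep_on nine f \<Longrightarrow> c \<notin> nine \<Longrightarrow> pd c f = (\<lambda>u. 0)"
  by (rule dep_on_pd_zero)

lemmas calc_rules = pd_add_sm pd_diff_sm pd_mult_sm pd_minus_sm pd_const pd_coord
  Dtot_add Dtot_diff Dtot_minus Dtot_mult Dtot_const Dtot_coord Dtot_atom_pd sm_pd dep_on_pd

definition bj :: "real \<Rightarrow> real \<Rightarrow> real \<Rightarrow> real \<Rightarrow> real \<Rightarrow> real \<Rightarrow> real \<Rightarrow> real \<Rightarrow> real \<Rightarrow> jet" where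
  "bj x y z t p px py pz pt = (\<lambda>c. case c of JX \<Rightarrow> x | JY \<Rightarrow> y | JZ \<Rightarrow> z | JT \<Rightarrow> t
     | JP a \<Rightarrow> if a = (0,0,0,0) then p else if a = (1,0,0,0) then px else if a = (0,1,0,0) then py
        else if a = (0,0,1,0) then pz else if a = (0,0,0,1) then pt else 0)"

lemma bj_simps[simp]: "bj x y z t p px py pz pt JX = x" "bj x y z t p px py pz pt JY = y"
  "bj x y z t p px py pz pt JZ = z" "bj x y z t p px py pz pt JT = t"
  "bj x y z t p px py pz pt (JP a) = (if a = (0,0,0,0) then p else if a = (1,0,0,0) then px else if a = (0,1,0,0) then py
        else if a = (0,0,1,0) then pz else if a = (0,0,0,1) then pt else 0)"
  by (simp_all add: bj_def)

lemma Euler_fun: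
  fixes g :: "jet \<Rightarrow> real" and c0 \<delta> \<beta> :: real
  assumes "sm g" "dep_on nine g"
  shows "Euler 3 (\<lambda>v. g v * KZK c0 \<delta> \<beta> v) = (\<lambda>u. let f = (\<lambda>v. g v * KZK c0 \<delta> \<beta> v) in
      pd (JP (0,0,0,0)) f u
    - Dtot JX 6 (pd (JP (1,0,0,0)) f) u
    - Dtot JY 6 (pd (JP (0,1,0,0)) f) u
    - Dtot JZ 6 (pd (JP (0,0,1,0)) f) u
    - Dtot JT 6 (pd (JP (0,0,0,1)) f) u
    + Dtot JT 6 (Dtot JT 6 (pd (JP (0,0,0,2)) f)) u
    - Dtot JT 6 (Dtot JT 6 (Dtot JT 6 (pd (JP (0,0,0,3)) f))) u
    + Dtot JZ 6 (Dtot JT 6 (pd (JP (0,0,1,1)) f)) u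
    + Dtot JX 6 (Dtot JX 6 (pd (JP (2,0,0,0)) f)) u
    + Dtot JY 6 (Dtot JY 6 (pd (JP (0,2,0,0)) f)) u)"
  using Euler_terms[OF assms] by (intro ext) simp

definition dl :: "jet \<Rightarrow> jc \<Rightarrow> (jet \<Rightarrow> real) \<Rightarrow> real" where
  "dl u c f = f (u(c:=1)) - f (u(c:=0))"

lemma dl_add: "dl u c (\<lambda>v. f v + g v) = dl u c f + dl u c g"
  unfolding dl_def by simp
lemma dl_diff: "dl u c (\<lambda>v. f v - g v) = dl u c f - dl u c g"
  unfolding dl_def by simp
lemma dl_minus: "dl u c (\<lambda>v. - f v) = - dl u c f"
  unfolding dl_def by simp
lemma dl_mult: "dl u c (\<lambda>v. f v * g v) = (if dl u c f = 0 then (if dl u c g = 0 then 0 else f (u(c:=0)) * dl u c g)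
    else dl u c f * g (u(c:=1)) + f (u(c:=0)) * dl u c g)"
  unfolding dl_def by (auto simp: algebra_simps)
lemma dl_const: "dl u c (\<lambda>v. k) = 0"
  unfolding dl_def by simp
lemma dl_coord: "dl u c (\<lambda>v. v c') = (if c' = c then 1 else 0)"
  unfolding dl_def by simp
lemma dl_atom9: "dep_on nine f \<Longrightarrow> c \<notin> nine \<Longrightarrow> dl u c f = 0"
  unfolding dl_def by (simp add: dep_on_upd)

lemmas dl_rules = dl_add dl_diff dl_minus dl_mult dl_const dl_coord dl_atom9

lemma Euler_zero_dl: "Euler 3 f = (\<lambda>u. 0) \<Longrightarrow> dl u c (Euler 3 f) = 0"
  unfolding dl_def by simp

lemma dl_atomS: "dep_on S f \<Longrightarrow> c \<notin> S \<Longrightarrow> dl u c f = 0"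
  unfolding dl_def by (simp add: dep_on_upd)

lemma dep_on_nine_agree: "dep_on nine f \<Longrightarrow> f u = f (bj (u JX) (u JY) (u JZ) (u JT) (u (JP (0,0,0,0)))
   (u (JP (1,0,0,0))) (u (JP (0,1,0,0))) (u (JP (0,0,1,0))) (u (JP (0,0,0,1))))"
proof -
  assume d: "dep_on nine f"
  have "\<forall>c\<in>nine. u c = bj (u JX) (u JY) (u JZ) (u JT) (u (JP (0,0,0,0)))
   (u (JP (1,0,0,0))) (u (JP (0,1,0,0))) (u (JP (0,0,1,0))) (u (JP (0,0,0,1))) c"
    by (simp add: nine_def)
  then show ?thesis using d unfolding dep_on_def by blast
qed

definition EK :: "(jet \<Rightarrow> real) \<Rightarrow> real \<Rightarrow> real \<Rightarrow> real \<Rightarrow> jet \<Rightarrow> real" where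
  "EK g c0 \<delta> \<beta> = Euler 3 (\<lambda>v. g v * KZK c0 \<delta> \<beta> v)"

context
  fixes g :: "jet \<Rightarrow> real" and c0 \<delta> \<beta> :: real
  assumes sg[simp]: "sm g" and dg[simp]: "dep_on nine g"
begin

declare calc_rules[simp] Dtot_atom[OF dg, simp] dep_on_pd_zero9[simp] JP_nine[simp] B5_def[simp] MI_def[simp]

lemmas EF = Euler_fun[OF sg dg, of c0 \<delta> \<beta>, folded EK_def, unfolded Let_def, unfolded KZK_eq, simplified]

lemma stage1_t: "dl (bj x y z t p px py pz pt) (JP (0,0,0,4)) (EK g c0 \<delta> \<beta>)
       = - 2 * \<delta> * pd (JP (0,0,0,1)) g (bj x y z t p px py pz pt)"
  unfolding EF by (simp add: dl_rules dep_on_upd9)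

lemma stage1_x: "dl (bj x y z t p px py pz pt) (JP (1,0,0,3)) (EK g c0 \<delta> \<beta>)
       = - 2 * \<delta> * pd (JP (1,0,0,0)) g (bj x y z t p px py pz pt)"
  unfolding EF by (simp add: dl_rules dep_on_upd9)

lemma stage1_y: "dl (bj x y z t p px py pz pt) (JP (0,1,0,3)) (EK g c0 \<delta> \<beta>)
       = - 2 * \<delta> * pd (JP (0,1,0,0)) g (bj x y z t p px py pz pt)"
  unfolding EF by (simp add: dl_rules dep_on_upd9)

lemma stage1_z: "dl (bj x y z t p px py pz pt) (JP (0,0,1,3)) (EK g c0 \<delta> \<beta>)
       = - 2 * \<delta> * pd (JP (0,0,1,0)) g (bj x y z t p px py pz pt)"
  unfolding EF by (simp add: dl_rules dep_on_upd9)

end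


definition S5 :: "jc set" where "S5 = {JX, JY, JZ, JT, JP (0,0,0,0)}"
definition S4 :: "jc set" where "S4 = {JX, JY, JZ, JT}"

lemma S5_mem[simp]: "JX \<in> S5" "JY \<in> S5" "JZ \<in> S5" "JT \<in> S5" "(JP a \<in> S5) = (a = (0,0,0,0))"
  unfolding S5_def by auto
lemma S4_mem[simp]: "JX \<in> S4" "JY \<in> S4" "JZ \<in> S4" "JT \<in> S4" "JP a \<notin> S4"
  unfolding S4_def by auto

lemma dep_on_pd_zeroS5: "dep_on S5 f \<Longrightarrow> c \<notin> S5 \<Longrightarrow> pd c f = (\<lambda>u. 0)"
  by (rule dep_on_pd_zero)
lemma dep_on_pd_zeroS4: "dep_on S4 f \<Longrightarrow> c \<notin> S4 \<Longrightarrow> pd c f = (\<lambda>u. 0)"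
  by (rule dep_on_pd_zero)
lemma dep_on_updS4: "dep_on S4 f \<Longrightarrow> c \<notin> S4 \<Longrightarrow> f (u(c:=s)) = f u"
  by (rule dep_on_upd)

lemma dep_on_remove:
  assumes d: "dep_on S g" and pg: "pdiff g" and z: "pd c g = (\<lambda>u. 0)"
  shows "dep_on (S - {c}) g"
proof -
  have const: "g (u(c:=s)) = g (u(c:=r))" for u s r
  proof -
    have "\<forall>s. ((\<lambda>s. g (u(c:=s))) has_field_derivative 0) (at s)"
    proof
      fix s
      have "(\<lambda>s. g (u(c:=s))) field_differentiable at s" using pdiffD[OF pg] .
      then have "((\<lambda>s. g (u(c:=s))) has_field_derivative deriv (\<lambda>s. g (u(c:=s))) s) (at s)"
        using DERIV_deriv_iff_field_differentiable by blast
      moreover have "deriv (\<lambda>s. g (u(c:=s))) s = 0"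
        using z pd_upd[of c g u s] by simp
      ultimately show "((\<lambda>s. g (u(c:=s))) has_field_derivative 0) (at s)" by simp
    qed
    then show ?thesis using DERIV_isconst_all by blast
  qed
  show ?thesis unfolding dep_on_def
  proof (intro allI impI)
    fix u v :: jet assume a: "\<forall>c'\<in>S - {c}. u c' = v c'"
    have "g u = g (u(c := v c))" using const[of u "u c" "v c"] by simp
    also have "\<dots> = g v"
    proof -
      have "\<forall>c'\<in>S. (u(c := v c)) c' = v c'" using a by auto
      then show ?thesis using d unfolding dep_on_def by blast
    qed
    finally show "g u = g v" .
  qed
qed

lemma dl_zero: "f = (\<lambda>u. 0) \<Longrightarrow> dl u c f = 0"
  unfolding dl_def by simp

context
  fixes g :: "jet \<Rightarrow> real" and c0 \<delta> \<beta> :: real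
  assumes sg[simp]: "sm g" and dg[simp]: "dep_on nine g"
begin

declare pd_const[simp]

lemma stage2:
  assumes d5[simp]: "dep_on S5 g"
  shows "dl (bj x y z t p px py pz pt) (JP (2,0,0,0)) (EK g c0 \<delta> \<beta>)
       = 2 * c0^4 * pd (JP (0,0,0,0)) g (bj x y z t p px py pz pt)"
  unfolding EF[OF sg dg] by (simp add: dl_rules dep_on_upd9 dep_on_pd_zeroS5 dep_on_pd JP_nine B5_def)

lemma stage3:
  assumes d4[simp]: "dep_on S4 g"
  shows "EK g c0 \<delta> \<beta> u = 2 * \<beta> * u (JP (0,0,0,0)) * pd JT (pd JT g) u - \<delta> * pd JT (pd JT (pd JT g)) u
     - 2 * c0^3 * pd JZ (pd JT g) u + c0^4 * (pd JX (pd JX g) u + pd JY (pd JY g) u)"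
  unfolding EF[OF sg dg] by (simp add: dep_on_pd_zeroS4 dep_on_pd JP_nine B5_def eval_nat_numeral algebra_simps)

lemma forward_g:
  assumes Z: "EK g c0 \<delta> \<beta> = (\<lambda>u. 0)" and pos: "c0 > 0" "\<delta> > 0" "\<beta> > 0"
  shows "dep_on S4 g \<and> pd JT (pd JT g) = (\<lambda>u. 0)"
proof -
  have ag: "h u = h (bj (u JX) (u JY) (u JZ) (u JT) (u (JP (0,0,0,0)))
   (u (JP (1,0,0,0))) (u (JP (0,1,0,0))) (u (JP (0,0,1,0))) (u (JP (0,0,0,1))))" if "dep_on nine h" for h u
    using dep_on_nine_agree[OF that] .
  have zt: "pd (JP (0,0,0,1)) g = (\<lambda>u. 0)"
  proof
    fix u
    show "pd (JP (0,0,0,1)) g u = 0"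
    proof -
      let ?b = "bj (u JX) (u JY) (u JZ) (u JT) (u (JP (0,0,0,0)))
         (u (JP (1,0,0,0))) (u (JP (0,1,0,0))) (u (JP (0,0,1,0))) (u (JP (0,0,0,1)))"
      have "dl ?b (JP (0,0,0,4)) (EK g c0 \<delta> \<beta>) = - 2 * \<delta> * pd (JP (0,0,0,1)) g ?b" by (rule stage1_t[OF sg dg])
      moreover have "dl ?b (JP (0,0,0,4)) (EK g c0 \<delta> \<beta>) = 0" by (rule dl_zero[OF Z])
      ultimately have "pd (JP (0,0,0,1)) g ?b = 0" using pos by simp
      then show ?thesis using ag[OF dep_on_pd[OF dg]] by metis
    qed
  qed
  have zx: "pd (JP (1,0,0,0)) g = (\<lambda>u. 0)"
  proof
    fix u
    show "pd (JP (1,0,0,0)) g u = 0"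
    proof -
      let ?b = "bj (u JX) (u JY) (u JZ) (u JT) (u (JP (0,0,0,0)))
         (u (JP (1,0,0,0))) (u (JP (0,1,0,0))) (u (JP (0,0,1,0))) (u (JP (0,0,0,1)))"
      have "dl ?b (JP (1,0,0,3)) (EK g c0 \<delta> \<beta>) = - 2 * \<delta> * pd (JP (1,0,0,0)) g ?b" by (rule stage1_x[OF sg dg])
      moreover have "dl ?b (JP (1,0,0,3)) (EK g c0 \<delta> \<beta>) = 0" by (rule dl_zero[OF Z])
      ultimately have "pd (JP (1,0,0,0)) g ?b = 0" using pos by simp
      then show ?thesis using ag[OF dep_on_pd[OF dg]] by metis
    qed
  qed
  have zy: "pd (JP (0,1,0,0)) g = (\<lambda>u. 0)"
  proof
    fix u
    show "pd (JP (0,1,0,0)) g u = 0"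
    proof -
      let ?b = "bj (u JX) (u JY) (u JZ) (u JT) (u (JP (0,0,0,0)))
         (u (JP (1,0,0,0))) (u (JP (0,1,0,0))) (u (JP (0,0,1,0))) (u (JP (0,0,0,1)))"
      have "dl ?b (JP (0,1,0,3)) (EK g c0 \<delta> \<beta>) = - 2 * \<delta> * pd (JP (0,1,0,0)) g ?b" by (rule stage1_y[OF sg dg])
      moreover have "dl ?b (JP (0,1,0,3)) (EK g c0 \<delta> \<beta>) = 0" by (rule dl_zero[OF Z])
      ultimately have "pd (JP (0,1,0,0)) g ?b = 0" using pos by simp
      then show ?thesis using ag[OF dep_on_pd[OF dg]] by metis
    qed
  qed
  have zz: "pd (JP (0,0,1,0)) g = (\<lambda>u. 0)"
  proof
    fix u
    show "pd (JP (0,0,1,0)) g u = 0"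
    proof -
      let ?b = "bj (u JX) (u JY) (u JZ) (u JT) (u (JP (0,0,0,0)))
         (u (JP (1,0,0,0))) (u (JP (0,1,0,0))) (u (JP (0,0,1,0))) (u (JP (0,0,0,1)))"
      have "dl ?b (JP (0,0,1,3)) (EK g c0 \<delta> \<beta>) = - 2 * \<delta> * pd (JP (0,0,1,0)) g ?b" by (rule stage1_z[OF sg dg])
      moreover have "dl ?b (JP (0,0,1,3)) (EK g c0 \<delta> \<beta>) = 0" by (rule dl_zero[OF Z])
      ultimately have "pd (JP (0,0,1,0)) g ?b = 0" using pos by simp
      then show ?thesis using ag[OF dep_on_pd[OF dg]] by metis
    qed
  qed
  have pg: "pdiff g" using sm_pdiff sg by blast
  have "dep_on (nine - {JP (0,0,0,1)} - {JP (1,0,0,0)} - {JP (0,1,0,0)} - {JP (0,0,1,0)}) g"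
    by (intro dep_on_remove[OF _ pg] dg zt zx zy zz)
  moreover have "nine - {JP (0,0,0,1)} - {JP (1,0,0,0)} - {JP (0,1,0,0)} - {JP (0,0,1,0)} = S5"
    unfolding nine_def S5_def by auto
  ultimately have d5: "dep_on S5 g" by simp
  have zp: "pd (JP (0,0,0,0)) g = (\<lambda>u. 0)"
  proof
    fix u
    show "pd (JP (0,0,0,0)) g u = 0"
    proof -
      let ?b = "bj (u JX) (u JY) (u JZ) (u JT) (u (JP (0,0,0,0)))
         (u (JP (1,0,0,0))) (u (JP (0,1,0,0))) (u (JP (0,0,1,0))) (u (JP (0,0,0,1)))"
      have "dl ?b (JP (2,0,0,0)) (EK g c0 \<delta> \<beta>) = 2 * c0^4 * pd (JP (0,0,0,0)) g ?b" by (rule stage2[OF d5])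
      moreover have "dl ?b (JP (2,0,0,0)) (EK g c0 \<delta> \<beta>) = 0" by (rule dl_zero[OF Z])
      ultimately have "pd (JP (0,0,0,0)) g ?b = 0" using pos by simp
      then show ?thesis using ag[OF dep_on_pd[OF dg]] by metis
    qed
  qed
  have "dep_on (S5 - {JP (0,0,0,0)}) g" by (rule dep_on_remove[OF d5 pg zp])
  moreover have "S5 - {JP (0,0,0,0)} = S4" unfolding S5_def S4_def by auto
  ultimately have d4: "dep_on S4 g" by simp
  have tt: "pd JT (pd JT g) u = 0" for u
  proof -
    have e1: "EK g c0 \<delta> \<beta> (u(JP (0,0,0,0) := 1)) = 0" and e0: "EK g c0 \<delta> \<beta> (u(JP (0,0,0,0) := 0)) = 0"
      using Z by simp_all
    have dd: "dep_on S4 (pd c (pd c' g))" "dep_on S4 (pd c (pd c' (pd c'' g)))" for c c' c''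
      by (intro dep_on_pd d4)+
    note s1 = stage3[OF d4, of "u(JP (0,0,0,0) := 1)"] and s0 = stage3[OF d4, of "u(JP (0,0,0,0) := 0)"]
    have "JP (0,0,0,0) \<notin> S4" by simp
    then have "EK g c0 \<delta> \<beta> (u(JP (0,0,0,0) := 1)) - EK g c0 \<delta> \<beta> (u(JP (0,0,0,0) := 0)) = 2 * \<beta> * pd JT (pd JT g) u"
      unfolding s1 s0 using dep_on_updS4[OF dd(1)] dep_on_updS4[OF dd(2)] by (simp add: algebra_simps)
    then have "2 * \<beta> * pd JT (pd JT g) u = 0" using e1 e0 by simp
    then show ?thesis using pos by simp
  qed
  show ?thesis using d4 tt by blast
qed

end


lemma pd_upd_other: "c' \<noteq> c \<Longrightarrow> pd c' (\<lambda>u. f (u(c:=k))) = (\<lambda>u. pd c' f (u(c:=k)))"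
  unfolding pd_def by (intro ext) (simp add: fun_upd_twist)

lemma pd_upd_same: "pd c (\<lambda>u. f (u(c:=k))) = (\<lambda>u. 0)"
  unfolding pd_def by simp

lemma pdiff_upd: "pdiff f \<Longrightarrow> pdiff (\<lambda>u. f (u(c:=k)))"
  unfolding pdiff_def
proof (intro allI)
  fix c' u assume a: "\<forall>c u. (\<lambda>s. f (u(c := s))) field_differentiable at (u c)"
  show "(\<lambda>s. f (u(c' := s, c := k))) field_differentiable at (u c')"
  proof (cases "c' = c")
    case True then show ?thesis by simp
  next
    case False
    then have "(\<lambda>s. f (u(c' := s, c := k))) = (\<lambda>s. f ((u(c := k))(c' := s)))"
      by (simp add: fun_upd_twist)
    moreover have "(\<lambda>s. f ((u(c := k))(c' := s))) field_differentiable at ((u(c := k)) c')"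
      using a by blast
    ultimately show ?thesis using False by simp
  qed
qed

lemma sm_upd: "sm f \<Longrightarrow> sm (\<lambda>u. f (u(c:=k)))"
proof -
  assume sf: "sm f"
  define F where "F = (\<lambda>u. f (u(c:=k)))"
  have "foldr pd cs F = (\<lambda>u. 0) \<or> foldr pd cs F = (\<lambda>u. foldr pd cs f (u(c:=k)))" for cs
  proof (induction cs)
    case Nil then show ?case unfolding F_def by (simp only: foldr.simps id_apply simp_thms)
  next
    case (Cons c' cs)
    have fc: "foldr pd (c' # cs) F = pd c' (foldr pd cs F)" "foldr pd (c' # cs) f = pd c' (foldr pd cs f)" by simp_all
    from Cons show ?case
    proof
      assume "foldr pd cs F = (\<lambda>u. 0)"
      then show ?case unfolding fc by (simp add: pd_const)
    next
      assume h: "foldr pd cs F = (\<lambda>u. foldr pd cs f (u(c := k)))"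
      show ?case
      proof (cases "c' = c")
        case True then show ?thesis unfolding fc h by (simp only: True pd_upd_same simp_thms)
      next
        case False then show ?thesis unfolding fc h by (simp only: pd_upd_other simp_thms)
      qed
    qed
  qed
  moreover have "pdiff (foldr pd cs f)" for cs using sf unfolding sm_def by blast
  ultimately have "pdiff (foldr pd cs F)" for cs using pdiff_upd pdiff_const by metis
  then show ?thesis unfolding sm_def F_def by blast
qed

lemma bj_JT: "(bj x y z t p px py pz pt)(JT := s) = bj x y z s p px py pz pt"
  by (rule ext) (simp add: bj_def split: jc.split)

lemma smooth_fun_sm: "smooth_fun f \<Longrightarrow> sm f"
  unfolding smooth_fun_def sm_def pdiff_def using rdiff_iff by blast

lemma pd_l3x: "pd JX (\<lambda>u. \<phi> (u JX) (u JY) (u JZ)) = (\<lambda>u. d3x \<phi> (u JX) (u JY) (u JZ))"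
  unfolding pd_def d3x_def by simp
lemma pd_l3y: "pd JY (\<lambda>u. \<phi> (u JX) (u JY) (u JZ)) = (\<lambda>u. d3y \<phi> (u JX) (u JY) (u JZ))"
  unfolding pd_def d3y_def by simp
lemma pd_l3z: "pd JZ (\<lambda>u. \<phi> (u JX) (u JY) (u JZ)) = (\<lambda>u. d3z \<phi> (u JX) (u JY) (u JZ))"
  unfolding pd_def d3z_def by simp
lemma pd_l3t: "pd JT (\<lambda>u. \<phi> (u JX) (u JY) (u JZ)) = (\<lambda>u. 0)"
  unfolding pd_def by simp
lemma pd_l3p: "pd (JP a) (\<lambda>u. \<phi> (u JX) (u JY) (u JZ)) = (\<lambda>u. 0)"
  unfolding pd_def by simp

lemma sm_l3x: "sm (\<lambda>u. \<phi> (u JX) (u JY) (u JZ)) \<Longrightarrow> sm (\<lambda>u. d3x \<phi> (u JX) (u JY) (u JZ))"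
proof -
  assume "sm (\<lambda>u. \<phi> (u JX) (u JY) (u JZ))"
  then have "sm (pd JX (\<lambda>u. \<phi> (u JX) (u JY) (u JZ)))" by (rule sm_pd)
  then show ?thesis by (simp only: pd_l3x)
qed
lemma sm_l3y: "sm (\<lambda>u. \<phi> (u JX) (u JY) (u JZ)) \<Longrightarrow> sm (\<lambda>u. d3y \<phi> (u JX) (u JY) (u JZ))"
proof -
  assume "sm (\<lambda>u. \<phi> (u JX) (u JY) (u JZ))"
  then have "sm (pd JY (\<lambda>u. \<phi> (u JX) (u JY) (u JZ)))" by (rule sm_pd)
  then show ?thesis by (simp only: pd_l3y)
qed
lemma sm_l3z: "sm (\<lambda>u. \<phi> (u JX) (u JY) (u JZ)) \<Longrightarrow> sm (\<lambda>u. d3z \<phi> (u JX) (u JY) (u JZ))"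
proof -
  assume "sm (\<lambda>u. \<phi> (u JX) (u JY) (u JZ))"
  then have "sm (pd JZ (\<lambda>u. \<phi> (u JX) (u JY) (u JZ)))" by (rule sm_pd)
  then show ?thesis by (simp only: pd_l3z)
qed

lemmas l3_rules = pd_l3x pd_l3y pd_l3z pd_l3t pd_l3p sm_l3x sm_l3y sm_l3z

lemma affine_from_tt:
  fixes \<Lambda> :: mult
  assumes sg: "sm (liftL \<Lambda>)" and d4: "dep_on S4 (liftL \<Lambda>)" and tt: "pd JT (pd JT (liftL \<Lambda>)) = (\<lambda>u. 0)"
  shows "\<exists>\<phi> \<psi>. (\<forall>x y z t p px py pz pt. \<Lambda> x y z t p px py pz pt = \<phi> x y z + t * \<psi> x y z)
     \<and> sm (\<lambda>u. \<phi> (u JX) (u JY) (u JZ)) \<and> sm (\<lambda>u. \<psi> (u JX) (u JY) (u JZ))"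
proof -
  define g where "g = liftL \<Lambda>"
  define \<phi> where "\<phi> x y z = g (bj x y z 0 0 0 0 0 0)" for x y z
  define \<psi> where "\<psi> x y z = pd JT g (bj x y z 0 0 0 0 0 0)" for x y z
  have sg': "sm g" using sg g_def by simp
  have pg: "pdiff g" "pdiff (pd JT g)" using sg' sm_pdiff sm_pd by blast+
  have d4g: "dep_on S4 g" "dep_on S4 (pd JT g)" using d4 g_def dep_on_pd by auto
  have agree: "h (bj x y z t p px py pz pt) = h (bj x y z t 0 0 0 0 0)" if "dep_on S4 h" for h x y z t p px py pz pt
    using that unfolding dep_on_def S4_def by simp
  have L: "\<Lambda> x y z t p px py pz pt = g (bj x y z t 0 0 0 0 0)" for x y z t p px py pz pt
  proof -
    have "\<Lambda> x y z t p px py pz pt = g (bj x y z t p px py pz pt)" unfolding g_def liftL_def by simp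
    then show ?thesis using agree[OF d4g(1)] by simp
  qed
  have aff: "g (bj x y z t 0 0 0 0 0) = \<phi> x y z + t * \<psi> x y z" for x y z t
  proof -
    define h where "h s = g (bj x y z s 0 0 0 0 0)" for s
    define k where "k s = pd JT g (bj x y z s 0 0 0 0 0)" for s
    have hup: "h = (\<lambda>s. g ((bj x y z 0 0 0 0 0 0)(JT := s)))" unfolding h_def by (simp add: bj_JT)
    have kup: "k = (\<lambda>s. pd JT g ((bj x y z 0 0 0 0 0 0)(JT := s)))" unfolding k_def by (simp add: bj_JT)
    have dk: "(k has_field_derivative 0) (at s)" for s
    proof -
      have "k field_differentiable at s" unfolding kup using pdiffD[OF pg(2)] .
      then have "(k has_field_derivative deriv k s) (at s)"
        using DERIV_deriv_iff_field_differentiable by blast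
      moreover have "deriv k s = 0" unfolding kup using tt pd_upd[of JT "pd JT g"] g_def by metis
      ultimately show ?thesis by simp
    qed
    have kc: "k s = \<psi> x y z" for s
      using DERIV_isconst_all[of k s 0] dk unfolding \<psi>_def k_def by simp
    have dh: "(h has_field_derivative \<psi> x y z) (at s)" for s
    proof -
      have "h field_differentiable at s" unfolding hup using pdiffD[OF pg(1)] .
      then have "(h has_field_derivative deriv h s) (at s)"
        using DERIV_deriv_iff_field_differentiable by blast
      moreover have "deriv h s = k s" unfolding hup kup using pd_upd[of JT g] by metis
      ultimately show ?thesis using kc by simp
    qed
    show ?thesis
    proof (cases "t = 0")
      case True then show ?thesis unfolding \<phi>_def by simp
    next
      case False
      have "0 \<noteq> t" using False by simp
      then have "h t - h 0 = (t - 0) * \<psi> x y z" using DERIV_const_ratio_const dh by blast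
      then show ?thesis unfolding h_def \<phi>_def by simp
    qed
  qed
  have "\<forall>x y z t p px py pz pt. \<Lambda> x y z t p px py pz pt = \<phi> x y z + t * \<psi> x y z"
    using L aff by simp
  moreover have "sm (\<lambda>u. \<phi> (u JX) (u JY) (u JZ))"
  proof -
    have "(\<lambda>u. \<phi> (u JX) (u JY) (u JZ)) = (\<lambda>u. g (u(JT := 0)))"
      unfolding \<phi>_def using d4g(1) unfolding dep_on_def S4_def by (intro ext) simp
    then show ?thesis using sm_upd[OF sg'] by simp
  qed
  moreover have "sm (\<lambda>u. \<psi> (u JX) (u JY) (u JZ))"
  proof -
    have "(\<lambda>u. \<psi> (u JX) (u JY) (u JZ)) = (\<lambda>u. pd JT g (u(JT := 0)))"
      unfolding \<psi>_def using d4g(2) unfolding dep_on_def S4_def by (intro ext) simp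
    then show ?thesis using sm_upd[OF sm_pd[OF sg']] by simp
  qed
  ultimately show ?thesis by blast
qed


lemma EK_affine:
  fixes \<phi> \<psi> :: "real \<Rightarrow> real \<Rightarrow> real \<Rightarrow> real"
  assumes s\<phi>[simp]: "sm (\<lambda>u. \<phi> (u JX) (u JY) (u JZ))" and s\<psi>[simp]: "sm (\<lambda>u. \<psi> (u JX) (u JY) (u JZ))"
  shows "EK (\<lambda>u. \<phi> (u JX) (u JY) (u JZ) + u JT * \<psi> (u JX) (u JY) (u JZ)) c0 \<delta> \<beta> u
    = c0^4 * (d3x (d3x \<phi>) (u JX) (u JY) (u JZ) + d3y (d3y \<phi>) (u JX) (u JY) (u JZ)
        + u JT * (d3x (d3x \<psi>) (u JX) (u JY) (u JZ) + d3y (d3y \<psi>) (u JX) (u JY) (u JZ)))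
      - 2 * c0^3 * d3z \<psi> (u JX) (u JY) (u JZ)"
proof -
  let ?g = "\<lambda>u. \<phi> (u JX) (u JY) (u JZ) + u JT * \<psi> (u JX) (u JY) (u JZ)"
  have sg: "sm ?g" by simp
  have d9: "dep_on nine ?g" unfolding dep_on_def nine_def by simp
  have d4: "dep_on S4 ?g" unfolding dep_on_def S4_def by simp
  have "EK ?g c0 \<delta> \<beta> u = 2 * \<beta> * u (JP (0,0,0,0)) * pd JT (pd JT ?g) u - \<delta> * pd JT (pd JT (pd JT ?g)) u
     - 2 * c0^3 * pd JZ (pd JT ?g) u + c0^4 * (pd JX (pd JX ?g) u + pd JY (pd JY ?g) u)"
    by (rule stage3[OF sg d9 d4])
  also have "\<dots> = c0^4 * (d3x (d3x \<phi>) (u JX) (u JY) (u JZ) + d3y (d3y \<phi>) (u JX) (u JY) (u JZ)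
        + u JT * (d3x (d3x \<psi>) (u JX) (u JY) (u JZ) + d3y (d3y \<psi>) (u JX) (u JY) (u JZ)))
      - 2 * c0^3 * d3z \<psi> (u JX) (u JY) (u JZ)"
    by (simp add: pd_add_sm pd_mult_sm pd_coord pd_const l3_rules algebra_simps)
  finally show ?thesis .
qed

lemma mult_iff_EK: "is_multiplier c0 \<delta> \<beta> \<Lambda> \<longleftrightarrow> EK (liftL \<Lambda>) c0 \<delta> \<beta> = (\<lambda>u. 0)"
  unfolding is_multiplier_def EK_def by (simp add: fun_eq_iff)

lemma part1:
  fixes \<Lambda> :: mult
  assumes pos: "c0 > 0" "\<delta> > 0" "\<beta> > 0" and sf: "smooth_fun (liftL \<Lambda>)"
  shows "is_multiplier c0 \<delta> \<beta> \<Lambda> \<longleftrightarrow>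
      (\<exists>\<phi> \<psi>. (\<forall>x y z t p px py pz pt. \<Lambda> x y z t p px py pz pt = \<phi> x y z + t * \<psi> x y z)
                      \<and> det_eqs c0 \<phi> \<psi>)"
proof
  have sg: "sm (liftL \<Lambda>)" using sf by (rule smooth_fun_sm)
  assume "is_multiplier c0 \<delta> \<beta> \<Lambda>"
  then have Z: "EK (liftL \<Lambda>) c0 \<delta> \<beta> = (\<lambda>u. 0)" using mult_iff_EK by blast
  from forward_g[OF sg dep_on_liftL Z pos] have d4: "dep_on S4 (liftL \<Lambda>)"
     and tt: "pd JT (pd JT (liftL \<Lambda>)) = (\<lambda>u. 0)" by blast+
  obtain \<phi> \<psi> where L: "\<forall>x y z t p px py pz pt. \<Lambda> x y z t p px py pz pt = \<phi> x y z + t * \<psi> x y z"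
    and s\<phi>: "sm (\<lambda>u. \<phi> (u JX) (u JY) (u JZ))" and s\<psi>: "sm (\<lambda>u. \<psi> (u JX) (u JY) (u JZ))"
    using affine_from_tt[OF sg d4 tt] by blast
  have gl: "liftL \<Lambda> = (\<lambda>u. \<phi> (u JX) (u JY) (u JZ) + u JT * \<psi> (u JX) (u JY) (u JZ))"
    unfolding liftL_def using L by simp
  have E: "c0^4 * (d3x (d3x \<phi>) x y z + d3y (d3y \<phi>) x y z + t * (d3x (d3x \<psi>) x y z + d3y (d3y \<psi>) x y z))
      - 2 * c0^3 * d3z \<psi> x y z = 0" for x y z t
    using EK_affine[OF s\<phi> s\<psi>, of c0 \<delta> \<beta> "bj x y z t 0 0 0 0 0"] Z gl by simp
  have "det_eqs c0 \<phi> \<psi>"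
    unfolding det_eqs_def
  proof (intro allI conjI)
    fix x y z
    have e0: "c0^4 * (d3x (d3x \<phi>) x y z + d3y (d3y \<phi>) x y z) = 2 * c0^3 * d3z \<psi> x y z"
      using E[of x y z 0] by simp
    have e1: "c0^4 * (d3x (d3x \<psi>) x y z + d3y (d3y \<psi>) x y z) = 0"
      using E[of x y z 1] E[of x y z 0] by (simp add: algebra_simps)
    show "d3x (d3x \<psi>) x y z + d3y (d3y \<psi>) x y z = 0" using e1 pos by simp
    have "c0^3 * (c0 * (d3x (d3x \<phi>) x y z + d3y (d3y \<phi>) x y z)) = c0^3 * (2 * d3z \<psi> x y z)"
    proof -
      have c4: "c0^4 = c0 * c0^3" by (simp add: eval_nat_numeral)
      show ?thesis using e0 unfolding c4 by (simp add: algebra_simps)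
    qed
    then have "c0 * (d3x (d3x \<phi>) x y z + d3y (d3y \<phi>) x y z) = 2 * d3z \<psi> x y z" using pos by simp
    then show "d3x (d3x \<phi>) x y z + d3y (d3y \<phi>) x y z = 2 / c0 * d3z \<psi> x y z"
      using pos by (simp add: field_simps)
  qed
  then show "\<exists>\<phi> \<psi>. (\<forall>x y z t p px py pz pt. \<Lambda> x y z t p px py pz pt = \<phi> x y z + t * \<psi> x y z)
                      \<and> det_eqs c0 \<phi> \<psi>" using L by blast
next
  have sg: "sm (liftL \<Lambda>)" using sf by (rule smooth_fun_sm)
  assume "\<exists>\<phi> \<psi>. (\<forall>x y z t p px py pz pt. \<Lambda> x y z t p px py pz pt = \<phi> x y z + t * \<psi> x y z)
                      \<and> det_eqs c0 \<phi> \<psi>"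
  then obtain \<phi> \<psi> where L: "\<forall>x y z t p px py pz pt. \<Lambda> x y z t p px py pz pt = \<phi> x y z + t * \<psi> x y z"
    and D: "det_eqs c0 \<phi> \<psi>" by blast
  have gl: "liftL \<Lambda> = (\<lambda>u. \<phi> (u JX) (u JY) (u JZ) + u JT * \<psi> (u JX) (u JY) (u JZ))"
    unfolding liftL_def using L by simp
  have "(\<lambda>u. \<phi> (u JX) (u JY) (u JZ)) = (\<lambda>u. liftL \<Lambda> (u(JT := 0)))" unfolding gl by simp
  then have s\<phi>: "sm (\<lambda>u. \<phi> (u JX) (u JY) (u JZ))" using sm_upd[OF sg] by simp
  have "(\<lambda>u. \<psi> (u JX) (u JY) (u JZ)) = (\<lambda>u. liftL \<Lambda> (u(JT := 1)) - liftL \<Lambda> (u(JT := 0)))" unfolding gl by simp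
  then have s\<psi>: "sm (\<lambda>u. \<psi> (u JX) (u JY) (u JZ))" using sm_diff[OF sm_upd[OF sg] sm_upd[OF sg]] by simp
  have "EK (liftL \<Lambda>) c0 \<delta> \<beta> u = 0" for u
  proof -
    have d1: "d3x (d3x \<phi>) (u JX) (u JY) (u JZ) + d3y (d3y \<phi>) (u JX) (u JY) (u JZ) = 2 / c0 * d3z \<psi> (u JX) (u JY) (u JZ)"
     and d2: "d3x (d3x \<psi>) (u JX) (u JY) (u JZ) + d3y (d3y \<psi>) (u JX) (u JY) (u JZ) = 0"
      using D unfolding det_eqs_def by blast+
    have "c0^4 * (2 / c0 * d3z \<psi> (u JX) (u JY) (u JZ)) = 2 * c0^3 * d3z \<psi> (u JX) (u JY) (u JZ)"
      using pos by (simp add: field_simps eval_nat_numeral)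
    then show ?thesis unfolding gl EK_affine[OF s\<phi> s\<psi>] using d1 d2 by simp
  qed
  then show "is_multiplier c0 \<delta> \<beta> \<Lambda>" using mult_iff_EK by blast
qed


lemma pd_l4t: "pd JT (\<lambda>u. q (u JX) (u JY) (u JZ) (u JT)) = (\<lambda>u. dT q (u JX) (u JY) (u JZ) (u JT))"
  unfolding pd_def dT_def by simp
lemma pd_l4x: "pd JX (\<lambda>u. q (u JX) (u JY) (u JZ) (u JT)) = (\<lambda>u. dX q (u JX) (u JY) (u JZ) (u JT))"
  unfolding pd_def dX_def by simp
lemma pd_l4y: "pd JY (\<lambda>u. q (u JX) (u JY) (u JZ) (u JT)) = (\<lambda>u. dY q (u JX) (u JY) (u JZ) (u JT))"
  unfolding pd_def dY_def by simp
lemma pd_l4z: "pd JZ (\<lambda>u. q (u JX) (u JY) (u JZ) (u JT)) = (\<lambda>u. dZ q (u JX) (u JY) (u JZ) (u JT))"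
  unfolding pd_def dZ_def by simp

lemma sm_l4t: "sm (\<lambda>u. q (u JX) (u JY) (u JZ) (u JT)) \<Longrightarrow> sm (\<lambda>u. dT q (u JX) (u JY) (u JZ) (u JT))"
proof -
  assume "sm (\<lambda>u. q (u JX) (u JY) (u JZ) (u JT))"
  then have "sm (pd JT (\<lambda>u. q (u JX) (u JY) (u JZ) (u JT)))" by (rule sm_pd)
  then show ?thesis by (simp only: pd_l4t)
qed
lemma sm_l4x: "sm (\<lambda>u. q (u JX) (u JY) (u JZ) (u JT)) \<Longrightarrow> sm (\<lambda>u. dX q (u JX) (u JY) (u JZ) (u JT))"
proof -
  assume "sm (\<lambda>u. q (u JX) (u JY) (u JZ) (u JT))"
  then have "sm (pd JX (\<lambda>u. q (u JX) (u JY) (u JZ) (u JT)))" by (rule sm_pd)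
  then show ?thesis by (simp only: pd_l4x)
qed
lemma sm_l4y: "sm (\<lambda>u. q (u JX) (u JY) (u JZ) (u JT)) \<Longrightarrow> sm (\<lambda>u. dY q (u JX) (u JY) (u JZ) (u JT))"
proof -
  assume "sm (\<lambda>u. q (u JX) (u JY) (u JZ) (u JT))"
  then have "sm (pd JY (\<lambda>u. q (u JX) (u JY) (u JZ) (u JT)))" by (rule sm_pd)
  then show ?thesis by (simp only: pd_l4y)
qed
lemma sm_l4z: "sm (\<lambda>u. q (u JX) (u JY) (u JZ) (u JT)) \<Longrightarrow> sm (\<lambda>u. dZ q (u JX) (u JY) (u JZ) (u JT))"
proof -
  assume "sm (\<lambda>u. q (u JX) (u JY) (u JZ) (u JT))"
  then have "sm (pd JZ (\<lambda>u. q (u JX) (u JY) (u JZ) (u JT)))" by (rule sm_pd)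
  then show ?thesis by (simp only: pd_l4z)
qed

lemmas l4_rules = pd_l4t pd_l4x pd_l4y pd_l4z sm_l4t sm_l4x sm_l4y sm_l4z

lemma dT_at: "dT q x y z t = pd JT (\<lambda>u. q (u JX) (u JY) (u JZ) (u JT)) (bj x y z t 0 0 0 0 0)"
  unfolding pd_l4t by simp
lemma dX_at: "dX q x y z t = pd JX (\<lambda>u. q (u JX) (u JY) (u JZ) (u JT)) (bj x y z t 0 0 0 0 0)"
  unfolding pd_l4x by simp
lemma dY_at: "dY q x y z t = pd JY (\<lambda>u. q (u JX) (u JY) (u JZ) (u JT)) (bj x y z t 0 0 0 0 0)"
  unfolding pd_l4y by simp
lemma dZ_at: "dZ q x y z t = pd JZ (\<lambda>u. q (u JX) (u JY) (u JZ) (u JT)) (bj x y z t 0 0 0 0 0)"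
  unfolding pd_l4z by simp

lemma dTT_at: "dT (dT q) x y z t = pd JT (pd JT (\<lambda>u. q (u JX) (u JY) (u JZ) (u JT))) (bj x y z t 0 0 0 0 0)"
  unfolding pd_l4t by simp

lemma dTT_sq:
  assumes sP[simp]: "sm (\<lambda>u. p (u JX) (u JY) (u JZ) (u JT))"
  shows "dT (dT (\<lambda>x y z t. (p x y z t)^2)) x y z t = 2 * (dT p x y z t)^2 + 2 * p x y z t * dT (dT p) x y z t"
  unfolding dTT_at power2_eq_square
  by (simp add: pd_add_sm pd_mult_sm pd_const l4_rules power2_eq_square algebra_simps)

lemma part2:
  fixes \<phi> \<psi> :: "real \<Rightarrow> real \<Rightarrow> real \<Rightarrow> real" and p :: "real \<Rightarrow> real \<Rightarrow> real \<Rightarrow> real \<Rightarrow> real"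
  assumes pos: "c0 > 0" "\<delta> > 0" "\<beta> > 0"
    and s\<phi>: "smooth3 \<phi>" and s\<psi>: "smooth3 \<psi>" and D: "det_eqs c0 \<phi> \<psi>" and sp: "smooth4 p"
    and K: "solves_KZK c0 \<delta> \<beta> p"
  shows "dT (Tt c0 \<delta> \<beta> \<phi> \<psi> p) x y z t + dX (Tx c0 \<phi> \<psi> p) x y z t
                      + dY (Ty c0 \<phi> \<psi> p) x y z t + dZ (Tz c0 \<psi> p) x y z t = 0"
proof -
  have sP[simp]: "sm (\<lambda>u. p (u JX) (u JY) (u JZ) (u JT))" using sp unfolding smooth4_def by (rule smooth_fun_sm)
  have sF[simp]: "sm (\<lambda>u. \<phi> (u JX) (u JY) (u JZ))" using s\<phi> unfolding smooth3_def by (rule smooth_fun_sm)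
  have sG[simp]: "sm (\<lambda>u. \<psi> (u JX) (u JY) (u JZ))" using s\<psi> unfolding smooth3_def by (rule smooth_fun_sm)
  have K': "\<delta> * dT (dT (dT p)) x y z t + \<beta> * (2 * (dT p x y z t)^2 + 2 * p x y z t * dT (dT p) x y z t)
     - 2 * c0^3 * dT (dZ p) x y z t + c0^4 * (dX (dX p) x y z t + dY (dY p) x y z t) = 0"
    using K unfolding solves_KZK_def dTT_sq[OF sP] by blast
  have D1: "d3x (d3x \<phi>) x y z + d3y (d3y \<phi>) x y z = (2 / c0) * d3z \<psi> x y z"
   and D2: "d3x (d3x \<psi>) x y z + d3y (d3y \<psi>) x y z = 0" using D unfolding det_eqs_def by blast+
  have LHS: "dT (Tt c0 \<delta> \<beta> \<phi> \<psi> p) x y z t + dX (Tx c0 \<phi> \<psi> p) x y z t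
                      + dY (Ty c0 \<phi> \<psi> p) x y z t + dZ (Tz c0 \<psi> p) x y z t =
     (\<phi> x y z + t * \<psi> x y z) * (\<delta> * dT (dT (dT p)) x y z t + \<beta> * (2 * (dT p x y z t)^2 + 2 * p x y z t * dT (dT p) x y z t)
     - 2 * c0^3 * dT (dZ p) x y z t + c0^4 * (dX (dX p) x y z t + dY (dY p) x y z t))
     - c0^4 * p x y z t * (d3x (d3x \<phi>) x y z + d3y (d3y \<phi>) x y z - (2 / c0) * d3z \<psi> x y z)
     - c0^4 * t * p x y z t * (d3x (d3x \<psi>) x y z + d3y (d3y \<psi>) x y z)"
  proof -
    have "dT (Tt c0 \<delta> \<beta> \<phi> \<psi> p) x y z t + dX (Tx c0 \<phi> \<psi> p) x y z t
                      + dY (Ty c0 \<phi> \<psi> p) x y z t + dZ (Tz c0 \<psi> p) x y z t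
     = pd JT (\<lambda>u. Tt c0 \<delta> \<beta> \<phi> \<psi> p (u JX) (u JY) (u JZ) (u JT)) (bj x y z t 0 0 0 0 0)
     + pd JX (\<lambda>u. Tx c0 \<phi> \<psi> p (u JX) (u JY) (u JZ) (u JT)) (bj x y z t 0 0 0 0 0)
     + pd JY (\<lambda>u. Ty c0 \<phi> \<psi> p (u JX) (u JY) (u JZ) (u JT)) (bj x y z t 0 0 0 0 0)
     + pd JZ (\<lambda>u. Tz c0 \<psi> p (u JX) (u JY) (u JZ) (u JT)) (bj x y z t 0 0 0 0 0)"
      by (simp only: dT_at dX_at dY_at dZ_at)
    also have "\<dots> = (\<phi> x y z + t * \<psi> x y z) * (\<delta> * dT (dT (dT p)) x y z t + \<beta> * (2 * (dT p x y z t)^2 + 2 * p x y z t * dT (dT p) x y z t)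
     - 2 * c0^3 * dT (dZ p) x y z t + c0^4 * (dX (dX p) x y z t + dY (dY p) x y z t))
     - c0^4 * p x y z t * (d3x (d3x \<phi>) x y z + d3y (d3y \<phi>) x y z - (2 / c0) * d3z \<psi> x y z)
     - c0^4 * t * p x y z t * (d3x (d3x \<psi>) x y z + d3y (d3y \<psi>) x y z)"
      unfolding Tt_def Tx_def Ty_def Tz_def
      using pos by (simp add: pd_add_sm pd_diff_sm pd_mult_sm pd_coord pd_const l4_rules l3_rules
          power2_eq_square field_simps eval_nat_numeral)
    finally show ?thesis .
  qed
  show ?thesis unfolding LHS K' D1 D2 by simp
qed

lemma foldr_pd_const: "foldr pd cs (\<lambda>u. k) = (\<lambda>u. if cs = [] then k else 0)"
  by (induction cs) (auto simp: pd_const)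

lemma smooth_const: "smooth_fun (\<lambda>u::jet. k)"
  unfolding smooth_fun_def foldr_pd_const
  by (auto intro: exI[of _ "{}"])

lemma part3:
  assumes pos: "c0 > 0" "\<delta> > 0" "\<beta> > 0"
  shows "infinite {\<Lambda> :: mult. smooth_fun (liftL \<Lambda>) \<and> is_multiplier c0 \<delta> \<beta> \<Lambda>}"
proof -
  define K :: "real \<Rightarrow> mult" where "K a = (\<lambda>x y z t p px py pz pt. a)" for a
  have lk: "liftL (K a) = (\<lambda>u. a)" for a unfolding K_def liftL_def by simp
  have mem: "K a \<in> {\<Lambda> :: mult. smooth_fun (liftL \<Lambda>) \<and> is_multiplier c0 \<delta> \<beta> \<Lambda>}" for a
  proof -
    have sf: "smooth_fun (liftL (K a))" unfolding lk by (rule smooth_const)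
    have de: "det_eqs c0 (\<lambda>x y z. a) (\<lambda>x y z. 0)"
      unfolding det_eqs_def d3x_def d3y_def d3z_def by simp
    have ka: "\<forall>x y z t p px py pz pt. K a x y z t p px py pz pt = a + t * 0" unfolding K_def by simp
    have "\<exists>\<phi> \<psi>. (\<forall>x y z t p px py pz pt. K a x y z t p px py pz pt = \<phi> x y z + t * \<psi> x y z) \<and> det_eqs c0 \<phi> \<psi>"
      apply (rule exI[of _ "\<lambda>x y z. a"], rule exI[of _ "\<lambda>x y z. 0"])
      using de ka by simp
    then have "is_multiplier c0 \<delta> \<beta> (K a)"
      using part1[OF pos sf] by blast
    then show ?thesis using sf by simp
  qed
  have "inj K"
  proof
    fix a b assume "K a = K b"
    then have "K a 0 0 0 0 0 0 0 0 0 = K b 0 0 0 0 0 0 0 0 0" by simp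
    then show "a = b" unfolding K_def by simp
  qed
  then have "infinite (range K)" using infinite_UNIV_char_0 finite_imageD by blast
  moreover have "range K \<subseteq> {\<Lambda> :: mult. smooth_fun (liftL \<Lambda>) \<and> is_multiplier c0 \<delta> \<beta> \<Lambda>}"
    using mem by blast
  ultimately show ?thesis using infinite_super by blast
qed



theorem mainTheorem3:
  fixes c0 \<delta> \<beta> :: real
  assumes "c0 > 0" and "\<delta> > 0" and "\<beta> > 0"
  shows "(\<forall>\<Lambda> :: mult. smooth_fun (liftL \<Lambda>) \<longrightarrow>
            (is_multiplier c0 \<delta> \<beta> \<Lambda> \<longleftrightarrow>
              (\<exists>\<phi> \<psi>. (\<forall>x y z t p px py pz pt. \<Lambda> x y z t p px py pz pt = \<phi> x y z + t * \<psi> x y z)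
                      \<and> det_eqs c0 \<phi> \<psi>)))
       \<and> (\<forall>\<phi> \<psi> p. smooth3 \<phi> \<and> smooth3 \<psi> \<and> det_eqs c0 \<phi> \<psi> \<and> smooth4 p \<and> solves_KZK c0 \<delta> \<beta> p \<longrightarrow>
            (\<forall>x y z t. dT (Tt c0 \<delta> \<beta> \<phi> \<psi> p) x y z t + dX (Tx c0 \<phi> \<psi> p) x y z t
                      + dY (Ty c0 \<phi> \<psi> p) x y z t + dZ (Tz c0 \<psi> p) x y z t = 0))
       \<and> infinite {\<Lambda> :: mult. smooth_fun (liftL \<Lambda>) \<and> is_multiplier c0 \<delta> \<beta> \<Lambda>}"
proof (intro conjI)
  show "\<forall>\<Lambda> :: mult. smooth_fun (liftL \<Lambda>) \<longrightarrow>
            (is_multiplier c0 \<delta> \<beta> \<Lambda> \<longleftrightarrow>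
              (\<exists>\<phi> \<psi>. (\<forall>x y z t p px py pz pt. \<Lambda> x y z t p px py pz pt = \<phi> x y z + t * \<psi> x y z)
                      \<and> det_eqs c0 \<phi> \<psi>))"
    using part1[OF assms] by blast
  show "\<forall>\<phi> \<psi> p. smooth3 \<phi> \<and> smooth3 \<psi> \<and> det_eqs c0 \<phi> \<psi> \<and> smooth4 p \<and> solves_KZK c0 \<delta> \<beta> p \<longrightarrow>
            (\<forall>x y z t. dT (Tt c0 \<delta> \<beta> \<phi> \<psi> p) x y z t + dX (Tx c0 \<phi> \<psi> p) x y z t
                      + dY (Ty c0 \<phi> \<psi> p) x y z t + dZ (Tz c0 \<psi> p) x y z t = 0)"
    using part2[OF assms] by blast
  show "infinite {\<Lambda> :: mult. smooth_fun (liftL \<Lambda>) \<and> is_multiplier c0 \<delta> \<beta> \<Lambda>}"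
    by (rule part3[OF assms])
qed

end
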